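(* Let $G$ be a planar graph with a fixed plane embedding and coloring $\sigma$ such that $(G,\sigma)$ is color-connected, and let $(G^*,\sigma)$ be the colored dual graph. Then $(G^*,\sigma)$ is color-connected, i.e. for every color $c$ the set of dual vertices $v^*$ with $c\in\sigma(v^* )$ induces a connected subgraph of $G^*$.
   Context: $\sigma:V\to 2^{[m]}$; $(G,\sigma)$ is color-connected if for each color $c$ the vertices of $G$ whose color set contains $c$ induce a connected subgraph. $G^*$ is the planar dual of the embedded $G$ (one vertex per face, one dual edge $e^*$ crossing each edge $e$). Colored dual: for an edge $e=uv$ of $G$, $\sigma(e)=\sigma(u)\cup\sigma(v)$ and $\sigma(e^* )=\sigma(e)$; for a dual vertex $v^*$, $\sigma(v^* )$ is the union of $\sigma(e^* )$ over all dual edges $e^*$ incident to $v^*$ (equivalently, the union of $\sigma(v)$ over the vertices $v$ on the boundary of the corresponding face). *)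

theory Defs
  imports "HOL-Analysis.Analysis"
begin

definition plane_graph ::
  "'v set \<Rightarrow> 'v set set \<Rightarrow> ('v \<Rightarrow> complex) \<Rightarrow> ('v set \<Rightarrow> real \<Rightarrow> complex) \<Rightarrow> bool" where
  "plane_graph V E pos arcs \<longleftrightarrow>
     finite V \<and>
     E \<subseteq> {{u, v} | u v. u \<in> V \<and> v \<in> V \<and> u \<noteq> v} \<and>
     inj_on pos V \<and>
     (\<forall>e\<in>E. arc (arcs e) \<and> {pathstart (arcs e), pathfinish (arcs e)} = pos ` e) \<and>
     (\<forall>e\<in>E. \<forall>v\<in>V. pos v \<in> path_image (arcs e) \<longrightarrow> v \<in> e) \<and>
     (\<forall>e\<in>E. \<forall>e'\<in>E. e \<noteq> e' \<longrightarrow>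
        path_image (arcs e) \<inter> path_image (arcs e') \<subseteq> pos ` (e \<inter> e'))"

definition drawing :: "'v set \<Rightarrow> 'v set set \<Rightarrow> ('v \<Rightarrow> complex) \<Rightarrow> ('v set \<Rightarrow> real \<Rightarrow> complex) \<Rightarrow> complex set" where
  "drawing V E pos arcs = pos ` V \<union> (\<Union>e\<in>E. path_image (arcs e))"

text \<open>Faces: the connected components of the complement of the drawing.
  These are the vertices of the dual graph.\<close>
definition faces :: "'v set \<Rightarrow> 'v set set \<Rightarrow> ('v \<Rightarrow> complex) \<Rightarrow> ('v set \<Rightarrow> real \<Rightarrow> complex) \<Rightarrow> complex set set" where
  "faces V E pos arcs = components (- drawing V E pos arcs)"

text \<open>Edge e lies on the boundary of face f, i.e. the dual edge e* is incident to the dual vertex f.\<close>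
definition edge_on_face :: "('v set \<Rightarrow> real \<Rightarrow> complex) \<Rightarrow> 'v set \<Rightarrow> complex set \<Rightarrow> bool" where
  "edge_on_face arcs e f \<longleftrightarrow> path_image (arcs e) \<subseteq> frontier f"

text \<open>Adjacency in the dual graph G*: two faces are joined by a dual edge e* iff e lies on
  the boundary of both (loops and multiplicities are irrelevant for connectivity).\<close>
definition dual_adj :: "'v set set \<Rightarrow> ('v set \<Rightarrow> real \<Rightarrow> complex) \<Rightarrow> complex set \<Rightarrow> complex set \<Rightarrow> bool" where
  "dual_adj E arcs f g \<longleftrightarrow> (\<exists>e\<in>E. edge_on_face arcs e f \<and> edge_on_face arcs e g)"

text \<open>Coloring of an edge: sigma(e) = sigma(u) \<union> sigma(v) for e = {u,v}; also the colour of e*.\<close>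
definition edge_color :: "('v \<Rightarrow> nat set) \<Rightarrow> 'v set \<Rightarrow> nat set" where
  "edge_color \<sigma> e = (\<Union>u\<in>e. \<sigma> u)"

definition dual_color :: "'v set set \<Rightarrow> ('v set \<Rightarrow> real \<Rightarrow> complex) \<Rightarrow> ('v \<Rightarrow> nat set) \<Rightarrow> complex set \<Rightarrow> nat set" where
  "dual_color E arcs \<sigma> f = (\<Union>e\<in>{e\<in>E. edge_on_face arcs e f}. edge_color \<sigma> e)"

definition induces_connected :: "('a \<Rightarrow> 'a \<Rightarrow> bool) \<Rightarrow> 'a set \<Rightarrow> bool" where
  "induces_connected adj S \<longleftrightarrow>
     (\<forall>x\<in>S. \<forall>y\<in>S. (x, y) \<in> {(a, b). a \<in> S \<and> b \<in> S \<and> adj a b}\<^sup>*)"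

definition color_connected :: "'v set \<Rightarrow> 'v set set \<Rightarrow> nat \<Rightarrow> ('v \<Rightarrow> nat set) \<Rightarrow> bool" where
  "color_connected V E m \<sigma> \<longleftrightarrow>
     (\<forall>c\<in>{1..m}. induces_connected (\<lambda>u v. {u, v} \<in> E) {v\<in>V. c \<in> \<sigma> v})"

definition dual_color_connected ::
  "'v set \<Rightarrow> 'v set set \<Rightarrow> ('v \<Rightarrow> complex) \<Rightarrow> ('v set \<Rightarrow> real \<Rightarrow> complex) \<Rightarrow> nat \<Rightarrow> ('v \<Rightarrow> nat set) \<Rightarrow> bool" where
  "dual_color_connected V E pos arcs m \<sigma> \<longleftrightarrow>
     (\<forall>c\<in>{1..m}. induces_connected (dual_adj E arcs)
        {f \<in> faces V E pos arcs. c \<in> dual_color E arcs \<sigma> f})"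

end

theory Submission
  imports Defs
begin

lemma path_near:
  fixes \<gamma> :: "real \<Rightarrow> complex"
  assumes "path \<gamma>" "\<tau> \<in> {0..1}" "r > 0"
  obtains \<delta> where "\<delta> > 0" "\<And>x. x \<in> {0..1} \<Longrightarrow> \<bar>x - \<tau>\<bar> < \<delta> \<Longrightarrow> dist (\<gamma> x) (\<gamma> \<tau>) < r"
proof -
  have "continuous_on {0..1} \<gamma>" using assms(1) by (simp add: path_def)
  then obtain \<delta> where "\<delta> > 0" "\<forall>x\<in>{0..1}. dist x \<tau> < \<delta> \<longrightarrow> dist (\<gamma> x) (\<gamma> \<tau>) < r"
    using assms unfolding continuous_on_iff by blast
  then show ?thesis using that by (auto simp: dist_real_def)
qed

lemma arc_no_interior:
  fixes \<gamma> :: "real \<Rightarrow> complex"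
  assumes "arc \<gamma>" "0 < t" "t < 1" "\<rho> > 0"
  shows "\<not> ball (\<gamma> t) \<rho> \<subseteq> path_image \<gamma>"
proof
  assume sub: "ball (\<gamma> t) \<rho> \<subseteq> path_image \<gamma>"
  have inj: "inj_on \<gamma> {0..1}" and pa: "path \<gamma>" using assms(1) by (auto simp: arc_def)
  define B where "B = ball (\<gamma> t) \<rho> - {\<gamma> t}"
  have cB: "connected B" unfolding B_def by (rule connected_punctured_ball) simp
  define P1 where "P1 = \<gamma> ` {0..t}"
  define P2 where "P2 = \<gamma> ` {t..1}"
  have cont: "continuous_on {0..1} \<gamma>" using pa by (simp add: path_def)
  have "compact P1" unfolding P1_def
    by (rule compact_continuous_image[OF continuous_on_subset[OF cont]]) (use assms in auto)
  hence cP1: "closed P1" by (rule compact_imp_closed)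
  have "compact P2" unfolding P2_def
    by (rule compact_continuous_image[OF continuous_on_subset[OF cont]]) (use assms in auto)
  hence cP2: "closed P2" by (rule compact_imp_closed)
  have "B \<subseteq> P1 \<union> P2"
  proof
    fix z assume "z \<in> B"
    then have "z \<in> path_image \<gamma>" using sub B_def by auto
    then obtain x where "x \<in> {0..1}" "z = \<gamma> x" by (auto simp: path_image_def)
    then show "z \<in> P1 \<union> P2" unfolding P1_def P2_def by (cases "x \<le> t") auto
  qed
  moreover have "P1 \<inter> P2 \<inter> B = {}"
  proof -
    have "P1 \<inter> P2 \<subseteq> {\<gamma> t}"
    proof
      fix z assume "z \<in> P1 \<inter> P2"
      then obtain x y where "x \<in> {0..t}" "y \<in> {t..1}" "z = \<gamma> x" "z = \<gamma> y"
        unfolding P1_def P2_def by auto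
      then have "x = y" using inj assms by (auto dest: inj_onD)
      then show "z \<in> {\<gamma> t}" using \<open>x \<in> {0..t}\<close> \<open>y \<in> {t..1}\<close> \<open>z = \<gamma> x\<close> by auto
    qed
    then show ?thesis by (auto simp: B_def)
  qed
  moreover have "P1 \<inter> B \<noteq> {}"
  proof -
    obtain \<delta> where d: "\<delta> > 0" "\<And>x. x \<in> {0..1} \<Longrightarrow> \<bar>x - t\<bar> < \<delta> \<Longrightarrow> dist (\<gamma> x) (\<gamma> t) < \<rho>"
      using path_near[OF pa _ assms(4), of t] assms by auto
    define x where "x = t - min \<delta> t / 2"
    have x: "x \<in> {0..t}" "x \<noteq> t" "\<bar>x - t\<bar> < \<delta>" using d assms by (auto simp: x_def)
    then have "\<gamma> x \<noteq> \<gamma> t" using inj assms by (auto dest: inj_onD)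
    moreover have "dist (\<gamma> x) (\<gamma> t) < \<rho>" using d x assms by auto
    ultimately have "\<gamma> x \<in> P1 \<inter> B" using x by (auto simp: P1_def B_def dist_commute)
    then show ?thesis by blast
  qed
  moreover have "P2 \<inter> B \<noteq> {}"
  proof -
    obtain \<delta> where d: "\<delta> > 0" "\<And>x. x \<in> {0..1} \<Longrightarrow> \<bar>x - t\<bar> < \<delta> \<Longrightarrow> dist (\<gamma> x) (\<gamma> t) < \<rho>"
      using path_near[OF pa _ assms(4), of t] assms by auto
    obtain \<mu> where m: "\<mu> > 0" "\<mu> \<le> 1 - t" "\<mu> \<le> \<delta>"
      using d(1) assms(3) by (intro that[of "min \<delta> (1 - t)"]) auto
    define x where "x = t + \<mu> / 2"
    have x: "x \<in> {t..1}" "x \<noteq> t" "\<bar>x - t\<bar> < \<delta>" unfolding x_def using m assms(2,3) by auto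
    then have "\<gamma> x \<noteq> \<gamma> t" using inj assms by (auto dest: inj_onD)
    moreover have "dist (\<gamma> x) (\<gamma> t) < \<rho>" using d x assms by auto
    ultimately have "\<gamma> x \<in> P2 \<inter> B" using x by (auto simp: P2_def B_def dist_commute)
    then show ?thesis by blast
  qed
  ultimately show False using cB cP1 cP2 unfolding connected_closed by blast
qed

lemma img_closed:
  fixes \<gamma> :: "real \<Rightarrow> complex"
  assumes "path \<gamma>" "0 \<le> a" "b \<le> 1"
  shows "closed (\<gamma> ` {a..b})" "compact (\<gamma> ` {a..b})"
proof -
  have "continuous_on {0..1} \<gamma>" using assms(1) by (simp add: path_def)
  then have "continuous_on {a..b} \<gamma>" by (rule continuous_on_subset) (use assms in auto)
  then show "compact (\<gamma> ` {a..b})" by (rule compact_continuous_image) simp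
  then show "closed (\<gamma> ` {a..b})" by (rule compact_imp_closed)
qed

lemma CL_dir:
  fixes \<gamma> :: "real \<Rightarrow> complex"
  assumes arc: "arc \<gamma>" and cKr: "closed Kr" and KrA: "Kr \<inter> path_image \<gamma> \<subseteq> {\<gamma> 0, \<gamma> 1}"
    and f: "f \<in> components (- (Kr \<union> path_image \<gamma>))"
    and ts: "0 < t" "t < s" "s < 1" and ft: "\<gamma> t \<in> closure f"
  shows "\<gamma> s \<in> closure f"
proof (rule ccontr)
  assume ns: "\<gamma> s \<notin> closure f"
  have inj: "inj_on \<gamma> {0..1}" and pa: "path \<gamma>" using arc by (auto simp: arc_def)
  have cont: "continuous_on {0..1} \<gamma>" using pa by (simp add: path_def)
  define K where "K = Kr \<union> path_image \<gamma>"
  have fK: "f \<subseteq> - K" using f in_components_subset K_def by blast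
  have frK: "frontier f \<subseteq> K"
  proof -
    have "closed K" unfolding K_def using cKr closed_path_image[OF pa] by blast
    then show ?thesis using f frontier_of_components_closed_complement K_def by blast
  qed
  have Aim: "path_image \<gamma> = \<gamma> ` {0..1}" by (simp add: path_image_def)
  have injD: "\<And>x y. x \<in> {0..1} \<Longrightarrow> y \<in> {0..1} \<Longrightarrow> \<gamma> x = \<gamma> y \<Longrightarrow> x = y"
    using inj by (auto dest: inj_onD)
  have notKr: "\<And>x. 0 < x \<Longrightarrow> x < 1 \<Longrightarrow> \<gamma> x \<notin> Kr"
  proof
    fix x assume x: "0 < x" "x < 1" "\<gamma> x \<in> Kr"
    then have "\<gamma> x \<in> {\<gamma> 0, \<gamma> 1}" using KrA Aim by auto
    then show False using injD[of x 0] injD[of x 1] x by auto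
  qed
  define T where "T = {t..s} \<inter> \<gamma> -` closure f"
  have cT: "closed T" unfolding T_def
    by (rule continuous_closed_preimage[OF continuous_on_subset[OF cont]]) (use ts in auto)
  have tT: "t \<in> T" using ft ts by (auto simp: T_def)
  have bT: "bdd_above T" unfolding T_def by (rule bdd_aboveI[of _ s]) auto
  define t0 where "t0 = Sup T"
  have t0T: "t0 \<in> T" unfolding t0_def using closed_contains_Sup[OF _ bT cT] tT by blast
  have t0ge: "t \<le> t0" unfolding t0_def using cSup_upper[OF tT bT] .
  have t0s: "t0 < s" using t0T ns by (auto simp: T_def order_le_less)
  have gap: "\<And>x. t0 < x \<Longrightarrow> x \<le> s \<Longrightarrow> \<gamma> x \<notin> closure f"
  proof
    fix x assume x: "t0 < x" "x \<le> s" "\<gamma> x \<in> closure f"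
    then have "x \<in> T" using t0ge by (auto simp: T_def)
    then have "x \<le> t0" unfolding t0_def using bT by (rule cSup_upper)
    then show False using x by auto
  qed
  have pt0: "\<gamma> t0 \<in> closure f" using t0T by (auto simp: T_def)
  define t1 where "t1 = t0 / 2"
  have t1: "0 < t1" "t1 < t0" using ts t0ge by (auto simp: t1_def)
  define X1 where "X1 = Kr \<union> \<gamma> ` {0..t1} \<union> \<gamma> ` {s..1}"
  define X2 where "X2 = \<gamma> ` {t1..t0}"
  have cX1: "closed X1" unfolding X1_def
    using cKr img_closed(1)[OF pa, of 0 t1] img_closed(1)[OF pa, of s 1] t1 t0s ts by auto
  have cX2: "compact X2" unfolding X2_def using img_closed(2)[OF pa, of t1 t0] t1 t0s ts by auto
  have X12: "X2 \<inter> X1 = {\<gamma> t1}"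
  proof
    show "X2 \<inter> X1 \<subseteq> {\<gamma> t1}"
    proof
      fix z assume z: "z \<in> X2 \<inter> X1"
      then obtain x where x: "x \<in> {t1..t0}" "z = \<gamma> x" by (auto simp: X2_def)
      have x01: "0 < x" "x < 1" using x t1 t0s ts by auto
      from z have "z \<in> Kr \<or> z \<in> \<gamma> ` {0..t1} \<or> z \<in> \<gamma> ` {s..1}" by (auto simp: X1_def)
      then show "z \<in> {\<gamma> t1}"
      proof (elim disjE)
        assume "z \<in> Kr" then show ?thesis using notKr[OF x01] x by auto
      next
        assume "z \<in> \<gamma> ` {0..t1}"
        then obtain y where "y \<in> {0..t1}" "z = \<gamma> y" by auto
        then have "x = y" using injD[of x y] x x01 t1 t0s ts by auto
        then show ?thesis using x \<open>y \<in> {0..t1}\<close> by auto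
      next
        assume "z \<in> \<gamma> ` {s..1}"
        then obtain y where "y \<in> {s..1}" "z = \<gamma> y" by auto
        then have "x = y" using injD[of x y] x x01 t1 t0s ts by auto
        then show ?thesis using x \<open>y \<in> {s..1}\<close> t0s by auto
      qed
    qed
    show "{\<gamma> t1} \<subseteq> X2 \<inter> X1" using t1 by (auto simp: X1_def X2_def)
  qed
  obtain a where a: "a \<in> f" using in_components_nonempty[OF f] by blast
  define b where "b = \<gamma> ((t0 + s) / 2)"
  have bnot: "b \<notin> closure f" unfolding b_def by (rule gap) (use t0s in auto)
  have nconn: "\<not> connected_component (- (X2 \<union> X1)) a b"
  proof
    assume "connected_component (- (X2 \<union> X1)) a b"
    then obtain C where C: "connected C" "C \<subseteq> - (X2 \<union> X1)" "a \<in> C" "b \<in> C"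
      by (auto simp: connected_component_def)
    have "C \<inter> f \<noteq> {}" using a C by blast
    moreover have "C - f \<noteq> {}" using C bnot closure_subset by blast
    ultimately obtain w where w: "w \<in> C" "w \<in> frontier f"
      using connected_Int_frontier[OF C(1)] by blast
    then have "w \<in> K" using frK by blast
    moreover have "w \<notin> Kr" using w C X1_def by blast
    ultimately obtain x where x: "x \<in> {0..1}" "w = \<gamma> x" using Aim K_def by auto
    have "\<not> x \<le> t1" using w C x by (auto simp: X1_def)
    moreover have "\<not> (t1 \<le> x \<and> x \<le> t0)" using w C x by (auto simp: X2_def)
    moreover have "\<not> s \<le> x" using w C x by (auto simp: X1_def)
    ultimately have "t0 < x" "x \<le> s" by auto
    then have "w \<notin> closure f" using gap x by auto
    then show False using w frontier_def by auto
  qed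
  \<comment> \<open>connected in complement of X2 (an arc)\<close>
  have c2: "connected_component (- X2) a b"
  proof -
    have "arc (subpath t1 t0 \<gamma>)" by (rule arc_subpath_arc[OF arc]) (use t1 t0s ts in auto)
    moreover have "path_image (subpath t1 t0 \<gamma>) = X2" using t1 by (simp add: path_image_subpath X2_def)
    ultimately have "connected (- X2)" using connected_arc_complement[of "subpath t1 t0 \<gamma>"] by simp
    moreover have "a \<notin> X2"
    proof -
      have "X2 \<subseteq> K" unfolding X2_def K_def Aim using t1 t0s ts by auto
      then show ?thesis using a fK by auto
    qed
    moreover have "b \<notin> X2"
    proof
      assume "b \<in> X2"
      then obtain x where "x \<in> {t1..t0}" "\<gamma> ((t0 + s) / 2) = \<gamma> x" by (auto simp: X2_def b_def)
      then have "x = (t0 + s) / 2" using injD[of x "(t0+s)/2"] t1 t0s ts by auto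
      then show False using \<open>x \<in> {t1..t0}\<close> t0s by auto
    qed
    ultimately show ?thesis unfolding connected_component_def by blast
  qed
  have c1: "connected_component (- X1) a b"
  proof -
    have p0: "\<gamma> t0 \<notin> X1"
    proof
      assume "\<gamma> t0 \<in> X1"
      moreover have "\<gamma> t0 \<notin> Kr" using notKr t1 t0s ts by auto
      moreover have "\<gamma> t0 \<notin> \<gamma> ` {0..t1}"
      proof
        assume "\<gamma> t0 \<in> \<gamma> ` {0..t1}"
        then obtain y where "y \<in> {0..t1}" "\<gamma> t0 = \<gamma> y" by auto
        then show False using injD[of t0 y] t1 t0s ts by auto
      qed
      moreover have "\<gamma> t0 \<notin> \<gamma> ` {s..1}"
      proof
        assume "\<gamma> t0 \<in> \<gamma> ` {s..1}"
        then obtain y where "y \<in> {s..1}" "\<gamma> t0 = \<gamma> y" by auto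
        then show False using injD[of t0 y] t1 t0s ts by auto
      qed
      ultimately show False by (auto simp: X1_def)
    qed
    obtain \<rho> where \<rho>: "\<rho> > 0" "ball (\<gamma> t0) \<rho> \<subseteq> - X1"
      using p0 cX1 open_contains_ball[of "- X1"] by (auto simp: closed_def)
    obtain a' where a': "a' \<in> f" "dist a' (\<gamma> t0) < \<rho>" using pt0 \<rho>(1) closure_approachable by blast
    obtain \<delta> where d: "\<delta> > 0" "\<And>x. x \<in> {0..1} \<Longrightarrow> \<bar>x - t0\<bar> < \<delta> \<Longrightarrow> dist (\<gamma> x) (\<gamma> t0) < \<rho>"
      using path_near[OF pa _ \<rho>(1), of t0] t1 t0s ts by auto
    obtain \<mu> where m: "\<mu> > 0" "\<mu> \<le> s - t0" "\<mu> \<le> \<delta>"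
      using d(1) t0s by (intro that[of "min \<delta> (s - t0)"]) auto
    define x' where "x' = t0 + \<mu> / 2"
    have x': "x' \<in> {0..1}" "t0 < x'" "x' < s" "\<bar>x' - t0\<bar> < \<delta>" unfolding x'_def using m t1 t0s ts by auto
    define Oa where "Oa = \<gamma> ` {t0<..<s}"
    have cO: "connected Oa" unfolding Oa_def
    proof (rule connected_continuous_image)
      show "continuous_on {t0<..<s} \<gamma>" by (rule continuous_on_subset[OF cont]) (use t1 ts t0s in auto)
    qed simp
    have OX1: "Oa \<subseteq> - X1"
    proof
      fix z assume "z \<in> Oa"
      then obtain x where x: "t0 < x" "x < s" and zx: "z = \<gamma> x" by (auto simp: Oa_def)
      have x01: "x \<in> {0..1}" "0 < x" "x < 1" using x t1 t0s ts by auto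
      have "\<gamma> x \<notin> Kr" using notKr x01 by blast
      moreover have "\<gamma> x \<notin> \<gamma> ` {0..t1}"
      proof
        assume "\<gamma> x \<in> \<gamma> ` {0..t1}"
        then obtain y where y: "y \<in> {0..t1}" "\<gamma> x = \<gamma> y" by blast
        have "y \<in> {0..1}" using y(1) t1 t0s ts by auto
        then have "x = y" using injD x01(1) y(2) by blast
        then show False using x y(1) t1 by auto
      qed
      moreover have "\<gamma> x \<notin> \<gamma> ` {s..1}"
      proof
        assume "\<gamma> x \<in> \<gamma> ` {s..1}"
        then obtain y where y: "y \<in> {s..1}" "\<gamma> x = \<gamma> y" by blast
        have "y \<in> {0..1}" using y(1) t1 t0s ts by auto
        then have "x = y" using injD x01(1) y(2) by blast
        then show False using x y(1) by auto
      qed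
      ultimately show "z \<in> - X1" unfolding X1_def zx by blast
    qed
    have fX1: "f \<subseteq> - X1"
    proof -
      have "X1 \<subseteq> K" unfolding X1_def K_def Aim using t1 t0s ts by auto
      then show ?thesis using fK by auto
    qed
    have "a' \<in> f \<inter> ball (\<gamma> t0) \<rho>" using a' by (simp add: dist_commute)
    then have "connected (f \<union> ball (\<gamma> t0) \<rho>)"
      using connected_Un[OF in_components_connected[OF f] connected_ball] by blast
    moreover have "\<gamma> x' \<in> Oa" using x' by (auto simp: Oa_def)
    moreover have "\<gamma> x' \<in> ball (\<gamma> t0) \<rho>" using d(2)[OF x'(1) x'(4)] by (simp add: dist_commute)
    ultimately have "connected ((f \<union> ball (\<gamma> t0) \<rho>) \<union> Oa)"
      using cO connected_Un[of "f \<union> ball (\<gamma> t0) \<rho>" Oa] by blast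
    moreover have "b \<in> Oa" unfolding b_def Oa_def using t0s by auto
    moreover have "(f \<union> ball (\<gamma> t0) \<rho>) \<union> Oa \<subseteq> - X1" using fX1 OX1 \<rho>(2) by blast
    moreover have "a \<in> (f \<union> ball (\<gamma> t0) \<rho>) \<union> Oa" using a by blast
    ultimately show ?thesis unfolding connected_component_def by blast
  qed
  have "connected_component (- (X2 \<union> X1)) a b"
    by (rule Janiszewski[OF cX2 cX1]) (use X12 c1 c2 in auto)
  then show False using nconn by blast
qed

lemma CL:
  fixes \<gamma> :: "real \<Rightarrow> complex"
  assumes arc: "arc \<gamma>" and cKr: "closed Kr" and KrA: "Kr \<inter> path_image \<gamma> \<subseteq> {\<gamma> 0, \<gamma> 1}"
    and f: "f \<in> components (- (Kr \<union> path_image \<gamma>))"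
    and t: "0 < t" "t < 1" and ft: "\<gamma> t \<in> closure f"
  shows "path_image \<gamma> \<subseteq> closure f"
proof -
  have mid: "\<gamma> s \<in> closure f" if s: "0 < s" "s < 1" for s
  proof (cases "t < s")
    case True
    then show ?thesis using CL_dir[OF arc cKr KrA f t(1) True s(2) ft] by blast
  next
    case False
    show ?thesis
    proof (cases "s = t")
      case True then show ?thesis using ft by simp
    next
      case False
      with \<open>\<not> t < s\<close> have st: "s < t" by auto
      define \<gamma>' where "\<gamma>' = reversepath \<gamma>"
      have a': "arc \<gamma>'" unfolding \<gamma>'_def using arc by (simp add: arc_reversepath)
      have pi: "path_image \<gamma>' = path_image \<gamma>" unfolding \<gamma>'_def by (simp add: path_image_reversepath)
      have e: "\<gamma>' 0 = \<gamma> 1" "\<gamma>' 1 = \<gamma> 0" "\<And>x. \<gamma>' (1 - x) = \<gamma> x"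
        unfolding \<gamma>'_def reversepath_def by auto
      have "\<gamma>' (1 - s) \<in> closure f"
      proof (rule CL_dir[where t="1-t" and s="1-s", OF a' cKr])
        show "Kr \<inter> path_image \<gamma>' \<subseteq> {\<gamma>' 0, \<gamma>' 1}" using KrA pi e by auto
        show "f \<in> components (- (Kr \<union> path_image \<gamma>'))" using f pi by simp
        show "\<gamma>' (1 - t) \<in> closure f" using ft e by simp
      qed (use t s st in auto)
      then show ?thesis using e by simp
    qed
  qed
  have pa: "path \<gamma>" using arc by (simp add: arc_def)
  have cont: "continuous_on {0..1} \<gamma>" using pa by (simp add: path_def)
  have "closed ({0..1} \<inter> \<gamma> -` closure f)"
    by (rule continuous_closed_preimage[OF cont]) auto
  moreover have "{0<..<1} \<subseteq> {0..1} \<inter> \<gamma> -` closure f" using mid by auto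
  ultimately have "closure {0<..<(1::real)} \<subseteq> {0..1} \<inter> \<gamma> -` closure f"
    by (rule closure_minimal[rotated])
  then have "{0..(1::real)} \<subseteq> \<gamma> -` closure f" by simp
  then show ?thesis by (auto simp: path_image_def)
qed

locale pg =
  fixes V :: "'v set" and E :: "'v set set" and pos :: "'v \<Rightarrow> complex"
    and arcs :: "'v set \<Rightarrow> real \<Rightarrow> complex"
  assumes PG: "plane_graph V E pos arcs"
begin

abbreviation "K \<equiv> drawing V E pos arcs"

lemma finV: "finite V" using PG by (simp add: plane_graph_def)
lemma Esub: "E \<subseteq> {{u, v} | u v. u \<in> V \<and> v \<in> V \<and> u \<noteq> v}" using PG by (simp add: plane_graph_def)
lemma injpos: "inj_on pos V" using PG by (simp add: plane_graph_def)
lemma arcE: "e \<in> E \<Longrightarrow> arc (arcs e)" using PG by (simp add: plane_graph_def)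
lemma ends: "e \<in> E \<Longrightarrow> {arcs e 0, arcs e 1} = pos ` e"
  using PG by (simp add: plane_graph_def pathstart_def pathfinish_def)
lemma vert: "e \<in> E \<Longrightarrow> v \<in> V \<Longrightarrow> pos v \<in> path_image (arcs e) \<Longrightarrow> v \<in> e"
  using PG by (simp add: plane_graph_def)
lemma cross: "e \<in> E \<Longrightarrow> e' \<in> E \<Longrightarrow> e \<noteq> e' \<Longrightarrow>
    path_image (arcs e) \<inter> path_image (arcs e') \<subseteq> pos ` (e \<inter> e')"
  using PG unfolding plane_graph_def by blast

lemma edge_two: "e \<in> E \<Longrightarrow> \<exists>a b. e = {a, b} \<and> a \<noteq> b \<and> a \<in> V \<and> b \<in> V"
  using Esub by blast

lemma eV: "e \<in> E \<Longrightarrow> e \<subseteq> V" using edge_two by blast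

lemma finE: "finite E"
proof -
  have "E \<subseteq> Pow V" using eV by blast
  then show ?thesis using finV finite_subset by blast
qed

lemma closedK: "closed K"
proof -
  have "closed (pos ` V)" using finV by (simp add: finite_imp_closed)
  moreover have "closed (\<Union>e\<in>E. path_image (arcs e))"
    using finE arcE by (intro closed_Union) (auto intro: closed_path_image arc_imp_path)
  ultimately show ?thesis unfolding drawing_def by blast
qed

definition Kr :: "'v set \<Rightarrow> complex set" where
  "Kr e = pos ` V \<union> (\<Union>e'\<in>E - {e}. path_image (arcs e'))"

lemma closedKr: "closed (Kr e)"
proof -
  have "closed (pos ` V)" using finV by (simp add: finite_imp_closed)
  moreover have "closed (\<Union>e'\<in>E - {e}. path_image (arcs e'))"
    using finE arcE by (intro closed_Union) (auto intro: closed_path_image arc_imp_path)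
  ultimately show ?thesis unfolding Kr_def by blast
qed

lemma K_eq: "e \<in> E \<Longrightarrow> K = Kr e \<union> path_image (arcs e)"
  unfolding Kr_def drawing_def by blast

lemma KrA: assumes e: "e \<in> E" shows "Kr e \<inter> path_image (arcs e) \<subseteq> {arcs e 0, arcs e 1}"
proof
  fix z assume z: "z \<in> Kr e \<inter> path_image (arcs e)"
  show "z \<in> {arcs e 0, arcs e 1}"
  proof (cases "z \<in> pos ` V")
    case True
    then obtain v where v: "v \<in> V" "z = pos v" by blast
    then have "v \<in> e" using vert[OF e v(1)] z by auto
    then show ?thesis using ends[OF e] v by auto
  next
    case False
    then obtain e' where e': "e' \<in> E" "e' \<noteq> e" "z \<in> path_image (arcs e')" using z Kr_def by auto
    then have "z \<in> pos ` (e \<inter> e')" using cross[OF e e'(1)] z by auto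
    then show ?thesis using ends[OF e] by auto
  qed
qed

lemma interior_notKr: assumes e: "e \<in> E" and t: "0 < t" "t < 1" shows "arcs e t \<notin> Kr e"
proof
  assume "arcs e t \<in> Kr e"
  moreover have "arcs e t \<in> path_image (arcs e)" using t by (auto simp: path_image_def)
  ultimately have "arcs e t \<in> {arcs e 0, arcs e 1}" using KrA[OF e] by blast
  moreover have "inj_on (arcs e) {0..1}" using arcE[OF e] by (simp add: arc_def)
  ultimately show False using t by (auto dest: inj_onD)
qed

lemma SC:
  assumes e: "e \<in> E" and f: "f \<in> components (- K)" and t: "0 < t" "t < 1"
    and ft: "arcs e t \<in> closure f"
  shows "edge_on_face arcs e f"
proof -
  have f': "f \<in> components (- (Kr e \<union> path_image (arcs e)))" using f K_eq[OF e] by simp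
  have "path_image (arcs e) \<subseteq> closure f"
    by (rule CL[OF arcE[OF e] closedKr KrA[OF e] f' t ft])
  moreover have "open f" using f closedK open_components by blast
  moreover have "f \<inter> path_image (arcs e) = {}" using f in_components_subset K_eq[OF e] by blast
  ultimately show ?thesis unfolding edge_on_face_def frontier_def
    by (auto simp: interior_open)
qed

lemma LK_edge:
  assumes e: "e \<in> E" and t: "0 < t" "t < 1"
  obtains \<rho> where "\<rho> > 0" "\<And>z. z \<in> ball (arcs e t) \<rho> \<Longrightarrow> z \<in> K \<Longrightarrow> \<exists>s. 0 < s \<and> s < 1 \<and> z = arcs e s"
proof -
  obtain \<rho> where \<rho>: "\<rho> > 0" "ball (arcs e t) \<rho> \<subseteq> - Kr e"
  proof -
    have "open (- Kr e)" using closedKr by (simp add: open_Compl)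
    then have "\<forall>x\<in>- Kr e. \<exists>\<epsilon>>0. ball x \<epsilon> \<subseteq> - Kr e" by (simp add: open_contains_ball)
    then show ?thesis using interior_notKr[OF e t] that by blast
  qed
  have "\<exists>s. 0 < s \<and> s < 1 \<and> z = arcs e s" if z: "z \<in> ball (arcs e t) \<rho>" "z \<in> K" for z
  proof -
    have "z \<notin> Kr e" using z \<rho> by blast
    then have "z \<in> path_image (arcs e)" using z K_eq[OF e] by blast
    then obtain s where s: "s \<in> {0..1}" "z = arcs e s" by (auto simp: path_image_def)
    have "arcs e 0 \<in> Kr e" "arcs e 1 \<in> Kr e" using ends[OF e] eV[OF e] unfolding Kr_def by blast+
    then have "s \<noteq> 0" "s \<noteq> 1" using s \<open>z \<notin> Kr e\<close> by auto
    then have "0 < s" "s < 1" using s by auto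
    then show ?thesis using s(2) by blast
  qed
  then show ?thesis using that \<rho>(1) by blast
qed

lemma face_near_edge:
  assumes e: "e \<in> E" and t: "0 < t" "t < 1"
  obtains \<rho> where "\<rho> > 0" "\<And>z. z \<in> ball (arcs e t) \<rho> \<Longrightarrow> z \<in> K \<Longrightarrow> \<exists>s. 0 < s \<and> s < 1 \<and> z = arcs e s"
    "\<And>z. z \<in> ball (arcs e t) \<rho> \<Longrightarrow> z \<notin> K \<Longrightarrow> edge_on_face arcs e (connected_component_set (- K) z)"
proof -
  obtain \<rho> where \<rho>: "\<rho> > 0" "\<And>z. z \<in> ball (arcs e t) \<rho> \<Longrightarrow> z \<in> K \<Longrightarrow> \<exists>s. 0 < s \<and> s < 1 \<and> z = arcs e s"
    using LK_edge[OF e t] by blast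
  have "edge_on_face arcs e (connected_component_set (- K) z)" if z: "z \<in> ball (arcs e t) \<rho>" "z \<notin> K" for z
  proof -
    define g where "g = connected_component_set (- K) z"
    have g: "g \<in> components (- K)" unfolding g_def using z by (auto intro: componentsI)
    have bg: "ball (arcs e t) \<rho> \<inter> g \<noteq> {}" using z by (auto simp: g_def)
    have "arcs e t \<in> K" using K_eq[OF e] t by (auto simp: path_image_def)
    moreover have "arcs e t \<in> ball (arcs e t) \<rho>" using \<rho>(1) by simp
    moreover have "g \<subseteq> - K" using g in_components_subset by blast
    ultimately have "ball (arcs e t) \<rho> - g \<noteq> {}" by blast
    then obtain w where w: "w \<in> ball (arcs e t) \<rho>" "w \<in> frontier g"
      using connected_Int_frontier[OF connected_ball bg] by blast
    have "w \<in> K" using w(2) g closedK frontier_of_components_closed_complement by blast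
    then obtain s where s: "0 < s" "s < 1" "w = arcs e s" using \<rho>(2) w(1) by blast
    have "arcs e s \<in> closure g" using w(2) s(3) by (simp add: frontier_def)
    then show ?thesis unfolding g_def[symmetric] by (rule SC[OF e g s(1,2)])
  qed
  then show ?thesis using that \<rho> by blast
qed

lemma edge_has_face:
  assumes e: "e \<in> E"
  shows "\<exists>f\<in>components (- K). edge_on_face arcs e f"
proof -
  have t: "0 < (1/2::real)" "(1/2::real) < 1" by auto
  obtain \<rho> where \<rho>: "\<rho> > 0" "\<And>z. z \<in> ball (arcs e (1/2)) \<rho> \<Longrightarrow> z \<in> K \<Longrightarrow> \<exists>s. 0 < s \<and> s < 1 \<and> z = arcs e s"
    "\<And>z. z \<in> ball (arcs e (1/2)) \<rho> \<Longrightarrow> z \<notin> K \<Longrightarrow> edge_on_face arcs e (connected_component_set (- K) z)"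
    using face_near_edge[OF e t] by blast
  have "\<not> ball (arcs e (1/2)) \<rho> \<subseteq> path_image (arcs e)"
    by (rule arc_no_interior[OF arcE[OF e] t \<rho>(1)])
  then obtain z where z: "z \<in> ball (arcs e (1/2)) \<rho>" "z \<notin> path_image (arcs e)" by blast
  have "z \<notin> K"
  proof
    assume "z \<in> K"
    then obtain s where "0 < s" "s < 1" "z = arcs e s" using \<rho>(2) z(1) by blast
    then show False using z(2) by (auto simp: path_image_def)
  qed
  then show ?thesis using \<rho>(3)[OF z(1)] componentsI[of z "- K"] by blast
qed


lemma vert_end: assumes e: "e \<in> E" and u: "u \<in> e" shows "arcs e 0 = pos u \<or> arcs e 1 = pos u"
proof -
  have "pos u \<in> {arcs e 0, arcs e 1}" using ends[OF e] u by simp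
  then show ?thesis by auto
qed

lemma near_vertex_point:
  assumes e: "e \<in> E" and u: "u \<in> e" and r: "r > 0"
  shows "\<exists>s. 0 < s \<and> s < 1 \<and> arcs e s \<in> ball (pos u) r \<and> arcs e s \<noteq> pos u"
proof -
  have pa: "path (arcs e)" using arcE[OF e] by (simp add: arc_imp_path)
  have inj: "inj_on (arcs e) {0..1}" using arcE[OF e] by (simp add: arc_def)
  obtain \<tau> where \<tau>: "\<tau> \<in> {0, 1}" "arcs e \<tau> = pos u" using vert_end[OF e u] by blast
  then have \<tau>01: "\<tau> \<in> {0..1}" by auto
  obtain \<delta> where d: "\<delta> > 0" "\<And>x. x \<in> {0..1} \<Longrightarrow> \<bar>x - \<tau>\<bar> < \<delta> \<Longrightarrow> dist (arcs e x) (arcs e \<tau>) < r"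
    using path_near[OF pa \<tau>01 r] by blast
  obtain \<mu> where m: "\<mu> > 0" "\<mu> \<le> 1" "\<mu> \<le> \<delta>"
    using d(1) by (intro that[of "min \<delta> 1"]) auto
  define x where "x = (if \<tau> = 0 then \<mu> / 2 else 1 - \<mu> / 2)"
  have x: "0 < x" "x < 1" "\<bar>x - \<tau>\<bar> < \<delta>" "x \<noteq> \<tau>" unfolding x_def using m \<tau>(1) by auto
  have "dist (arcs e x) (pos u) < r" using d(2)[of x] x \<tau>(2) by auto
  moreover have "arcs e x \<noteq> pos u"
  proof
    assume "arcs e x = pos u"
    then have "arcs e x = arcs e \<tau>" using \<tau>(2) by simp
    moreover have "x \<in> {0..1}" using x(1,2) by auto
    ultimately have "x = \<tau>" using inj \<tau>01 by (auto dest: inj_onD)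
    then show False using x(4) by blast
  qed
  ultimately show ?thesis using x(1,2) by (auto simp: dist_commute)
qed

lemma LK_vertex:
  assumes u: "u \<in> V"
  obtains r where "r > 0" "\<And>z. z \<in> ball (pos u) r \<Longrightarrow> z \<in> K \<Longrightarrow>
      z = pos u \<or> (\<exists>e\<in>E. u \<in> e \<and> (\<exists>s. 0 < s \<and> s < 1 \<and> z = arcs e s))"
proof -
  define Far where "Far = pos ` (V - {u}) \<union> (\<Union>e\<in>{e\<in>E. u \<notin> e}. path_image (arcs e))"
  have cF: "closed Far"
  proof -
    have "closed (pos ` (V - {u}))" using finV by (simp add: finite_imp_closed)
    moreover have "closed (\<Union>e\<in>{e\<in>E. u \<notin> e}. path_image (arcs e))"
      using finE arcE by (intro closed_Union) (auto intro: closed_path_image arc_imp_path)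
    ultimately show ?thesis unfolding Far_def by blast
  qed
  have uF: "pos u \<notin> Far"
  proof
    assume "pos u \<in> Far"
    then consider "pos u \<in> pos ` (V - {u})" | e where "e \<in> E" "u \<notin> e" "pos u \<in> path_image (arcs e)"
      unfolding Far_def by blast
    then show False
    proof cases
      case 1
      then obtain v where "v \<in> V" "v \<noteq> u" "pos u = pos v" by blast
      then show False using injpos u by (auto dest: inj_onD)
    next
      case 2
      then show False using vert[OF 2(1) u 2(3)] by blast
    qed
  qed
  have "open (- Far)" using cF by (simp add: open_Compl)
  then have "\<forall>x\<in>- Far. \<exists>\<epsilon>>0. ball x \<epsilon> \<subseteq> - Far" by (simp add: open_contains_ball)
  then obtain r where r: "r > 0" "ball (pos u) r \<subseteq> - Far" using uF by blast
  have "z = pos u \<or> (\<exists>e\<in>E. u \<in> e \<and> (\<exists>s. 0 < s \<and> s < 1 \<and> z = arcs e s))"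
    if z: "z \<in> ball (pos u) r" "z \<in> K" for z
  proof -
    have zF: "z \<notin> Far" using z r by blast
    show ?thesis
    proof (cases "z \<in> pos ` V")
      case True
      then show ?thesis using zF unfolding Far_def by blast
    next
      case False
      then obtain e where e: "e \<in> E" "z \<in> path_image (arcs e)" using z(2) unfolding drawing_def by blast
      have ue: "u \<in> e" using zF e unfolding Far_def by blast
      obtain s where s: "s \<in> {0..1}" "z = arcs e s" using e(2) by (auto simp: path_image_def)
      show ?thesis
      proof (cases "s = 0 \<or> s = 1")
        case True
        then have "z \<in> pos ` e" using ends[OF e(1)] s by auto
        then have "z \<in> pos ` V" using eV[OF e(1)] by blast
        then show ?thesis using False by blast
      next
        case False
        then have "0 < s" "s < 1" using s by auto
        then show ?thesis using e(1) ue s(2) by blast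
      qed
    qed
  qed
  then show ?thesis using that r(1) by blast
qed

lemma edges_meet:
  assumes e: "e \<in> E" and e': "e' \<in> E" and ne: "e \<noteq> e'" and u: "u \<in> e" "u \<in> e'"
  shows "path_image (arcs e) \<inter> path_image (arcs e') \<subseteq> {pos u}"
proof -
  have "e \<inter> e' \<subseteq> {u}"
  proof
    fix w assume w: "w \<in> e \<inter> e'"
    show "w \<in> {u}"
    proof (rule ccontr)
      assume "w \<notin> {u}"
      then have wu: "w \<noteq> u" by simp
      obtain a b where ab: "e = {a, b}" "a \<noteq> b" using edge_two[OF e] by blast
      obtain a' b' where ab': "e' = {a', b'}" "a' \<noteq> b'" using edge_two[OF e'] by blast
      have "e = {u, w}" using ab u w wu by auto
      moreover have "e' = {u, w}" using ab' u w wu by auto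
      ultimately show False using ne by simp
    qed
  qed
  then show ?thesis using cross[OF e e' ne] by blast
qed


lemma face_color:
  assumes "e \<in> E" "w \<in> e" "c \<in> \<sigma> w" "edge_on_face arcs e f"
  shows "c \<in> dual_color E arcs \<sigma> f"
  using assms unfolding dual_color_def edge_color_def by blast

lemma LL:
  fixes S P Q :: "complex set set" and \<sigma> :: "'v \<Rightarrow> nat set"
  assumes u: "u \<in> V" "c \<in> \<sigma> u"
    and S_def: "S = {f \<in> components (- K). c \<in> dual_color E arcs \<sigma> f}"
    and PQ: "P \<union> Q = S" "P \<inter> Q = {}"
    and noadj: "\<And>a b. a \<in> P \<Longrightarrow> b \<in> Q \<Longrightarrow> \<not> dual_adj E arcs a b"
    and e1: "e1 \<in> E" "u \<in> e1" "f1 \<in> P" "edge_on_face arcs e1 f1"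
    and e2: "e2 \<in> E" "u \<in> e2" "f2 \<in> Q" "edge_on_face arcs e2 f2"
  shows False
proof -
  obtain r where r: "r > 0" "\<And>z. z \<in> ball (pos u) r \<Longrightarrow> z \<in> K \<Longrightarrow>
      z = pos u \<or> (\<exists>e\<in>E. u \<in> e \<and> (\<exists>s. 0 < s \<and> s < 1 \<and> z = arcs e s))"
    using LK_vertex[OF u(1)] by metis
  define B where "B = ball (pos u) r - {pos u}"
  have cB: "connected B" unfolding B_def by (rule connected_punctured_ball) simp
  define X where "X Pc = B \<inter> (\<Union>Pc \<union> (\<Union>e\<in>{e\<in>E. u \<in> e \<and> (\<exists>f\<in>Pc. edge_on_face arcs e f)}. path_image (arcs e)))"
    for Pc :: "complex set set"
  have Scomp: "S \<subseteq> components (- K)" using S_def by blast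
  have inS: "g \<in> S" if "e \<in> E" "u \<in> e" "g \<in> components (- K)" "edge_on_face arcs e g" for e g
    using face_color[where \<sigma>=\<sigma>, OF that(1,2) u(2) that(4)] that(3) S_def by blast
  have clsP: "g \<in> P" if "f \<in> P" "g \<in> S" "edge_on_face arcs e f" "edge_on_face arcs e g" "e \<in> E" for e f g
  proof (rule ccontr)
    assume "g \<notin> P"
    then have "g \<in> Q" using PQ that(2) by blast
    moreover have "dual_adj E arcs f g" using that unfolding dual_adj_def by blast
    ultimately show False using noadj that(1) by blast
  qed
  have clsQ: "g \<in> Q" if "f \<in> Q" "g \<in> S" "edge_on_face arcs e f" "edge_on_face arcs e g" "e \<in> E" for e f g
  proof (rule ccontr)
    assume "g \<notin> Q"
    then have "g \<in> P" using PQ that(2) by blast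
    moreover have "dual_adj E arcs g f" using that unfolding dual_adj_def by blast
    ultimately show False using noadj that(1) by blast
  qed
  have interior_pt: "\<exists>s. 0 < s \<and> s < 1 \<and> x = arcs e s"
    if x: "x \<in> B" "x \<in> path_image (arcs e)" and e: "e \<in> E" for x e
  proof -
    obtain s where s: "s \<in> {0..1}" "x = arcs e s" using x(2) by (auto simp: path_image_def)
    show ?thesis
    proof (cases "s = 0 \<or> s = 1")
      case True
      then have "x \<in> pos ` V" using ends[OF e] eV[OF e] s by auto
      moreover have xK: "x \<in> K" using x(2) e unfolding drawing_def by blast
      have xb: "x \<in> ball (pos u) r" "x \<noteq> pos u" using x(1) unfolding B_def by auto
      obtain e'' s'' where es: "e'' \<in> E" "0 < s''" "s'' < 1" "x = arcs e'' s''"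
        using r(2)[OF xb(1) xK] xb(2) by blast
      have "x \<notin> Kr e''" using interior_notKr[OF es(1-3)] es(4) by simp
      moreover have "pos ` V \<subseteq> Kr e''" unfolding Kr_def by blast
      ultimately show ?thesis using \<open>x \<in> pos ` V\<close> by blast
    next
      case False
      then have "0 < s" "s < 1" using s by auto
      then show ?thesis using s(2) by blast
    qed
  qed
  have opn: "openin (top_of_set B) (X Pc)"
    if Pc: "Pc \<subseteq> S" "\<And>e f g. f \<in> Pc \<Longrightarrow> g \<in> S \<Longrightarrow> edge_on_face arcs e f \<Longrightarrow> edge_on_face arcs e g \<Longrightarrow> e \<in> E \<Longrightarrow> g \<in> Pc"
    for Pc
    unfolding openin_euclidean_subtopology_iff
  proof (intro conjI ballI)
    show "X Pc \<subseteq> B" unfolding X_def by blast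
    fix x assume x: "x \<in> X Pc"
    then have xB: "x \<in> B" unfolding X_def by blast
    from x consider f where "f \<in> Pc" "x \<in> f"
      | e f where "e \<in> E" "u \<in> e" "f \<in> Pc" "edge_on_face arcs e f" "x \<in> path_image (arcs e)"
      unfolding X_def by blast
    then show "\<exists>\<epsilon>>0. \<forall>x'\<in>B. dist x' x < \<epsilon> \<longrightarrow> x' \<in> X Pc"
    proof cases
      case 1
      have "open f" using 1 Pc(1) Scomp closedK open_components by blast
      then obtain \<epsilon> where "\<epsilon> > 0" "ball x \<epsilon> \<subseteq> f" using 1(2) open_contains_ball by blast
      then have "\<forall>x'\<in>B. dist x' x < \<epsilon> \<longrightarrow> x' \<in> X Pc"
        using 1 unfolding X_def by (auto simp: dist_commute subset_iff)
      then show ?thesis using \<open>\<epsilon> > 0\<close> by blast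
    next
      case 2
      obtain s where s: "0 < s" "s < 1" "x = arcs e s" using interior_pt[OF xB 2(5) 2(1)] by blast
      obtain \<rho> where \<rho>: "\<rho> > 0" "\<And>z. z \<in> ball (arcs e s) \<rho> \<Longrightarrow> z \<in> K \<Longrightarrow> \<exists>s. 0 < s \<and> s < 1 \<and> z = arcs e s"
        "\<And>z. z \<in> ball (arcs e s) \<rho> \<Longrightarrow> z \<notin> K \<Longrightarrow> edge_on_face arcs e (connected_component_set (- K) z)"
        using face_near_edge[OF 2(1) s(1,2)] by blast
      have "x' \<in> X Pc" if x': "x' \<in> B" "dist x' x < \<rho>" for x'
      proof -
        have xb: "x' \<in> ball (arcs e s) \<rho>" using x' s(3) by (simp add: dist_commute)
        show ?thesis
        proof (cases "x' \<in> K")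
          case True
          then obtain s' where "x' = arcs e s'" "0 < s'" "s' < 1" using \<rho>(2)[OF xb] by blast
          then have "x' \<in> path_image (arcs e)" by (auto simp: path_image_def)
          then show ?thesis using x'(1) 2 unfolding X_def by blast
        next
          case False
          define g where "g = connected_component_set (- K) x'"
          have g: "g \<in> components (- K)" "x' \<in> g" unfolding g_def using False by (auto intro: componentsI)
          have eg: "edge_on_face arcs e g" unfolding g_def using \<rho>(3)[OF xb False] .
          have "g \<in> S" using inS[OF 2(1,2) g(1) eg] .
          then have "g \<in> Pc" using Pc(2)[OF 2(3) _ 2(4) eg 2(1)] by blast
          then show ?thesis using g(2) x'(1) unfolding X_def by blast
        qed
      qed
      then show ?thesis using \<rho>(1) by blast
    qed
  qed
  have cover: "B \<subseteq> X P \<union> X Q"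
  proof
    fix z assume zB: "z \<in> B"
    show "z \<in> X P \<union> X Q"
    proof (cases "z \<in> K")
      case True
      then obtain e s where e: "e \<in> E" "u \<in> e" "0 < s" "s < 1" "z = arcs e s"
      proof -
        have zb: "z \<in> ball (pos u) r" "z \<noteq> pos u" using zB unfolding B_def by auto
        show ?thesis using r(2)[OF zb(1) True] zb(2) that by blast
      qed
      obtain f where f: "f \<in> components (- K)" "edge_on_face arcs e f" using edge_has_face[OF e(1)] by blast
      have "f \<in> S" using inS[OF e(1,2) f] .
      moreover have "z \<in> path_image (arcs e)" using e by (auto simp: path_image_def)
      ultimately have zi: "z \<in> path_image (arcs e)" "f \<in> P \<or> f \<in> Q" using PQ(1) by blast+
      show ?thesis
      proof (cases "f \<in> P")
        case True
        then have "z \<in> X P" unfolding X_def using zB zi(1) e(1,2) f(2) by blast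
        then show ?thesis by blast
      next
        case False
        then have "f \<in> Q" using zi(2) by blast
        then have "z \<in> X Q" unfolding X_def using zB zi(1) e(1,2) f(2) by blast
        then show ?thesis by blast
      qed
    next
      case False
      define g where "g = connected_component_set (- K) z"
      have g: "g \<in> components (- K)" "z \<in> g" unfolding g_def using False by (auto intro: componentsI)
      have "B \<inter> g \<noteq> {}" using g zB by blast
      moreover have "B - g \<noteq> {}"
      proof -
        obtain s where s: "0 < s" "s < 1" "arcs e1 s \<in> ball (pos u) r" "arcs e1 s \<noteq> pos u"
          using near_vertex_point[OF e1(1,2) r(1)] by blast
        have "arcs e1 s \<in> path_image (arcs e1)" using s(1,2) unfolding path_image_def by auto
        then have "arcs e1 s \<in> K" using e1(1) unfolding drawing_def by blast
        moreover have "g \<subseteq> - K" using g(1) in_components_subset by blast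
        ultimately show ?thesis using s B_def by blast
      qed
      ultimately obtain w where w: "w \<in> B" "w \<in> frontier g"
        using connected_Int_frontier[OF cB] by blast
      have "w \<in> K" using w(2) g(1) closedK frontier_of_components_closed_complement by blast
      then obtain e s where e: "e \<in> E" "u \<in> e" "0 < s" "s < 1" "w = arcs e s"
      proof -
        have wb: "w \<in> ball (pos u) r" "w \<noteq> pos u" using w(1) unfolding B_def by auto
        show ?thesis using r(2)[OF wb(1) \<open>w \<in> K\<close>] wb(2) that by blast
      qed
      have "arcs e s \<in> closure g" using w(2) e(5) by (simp add: frontier_def)
      then have "edge_on_face arcs e g" by (rule SC[OF e(1) g(1) e(3,4)])
      then have "g \<in> S" using inS[OF e(1,2) g(1)] by blast
      then have "g \<in> P \<or> g \<in> Q" using PQ(1) by blast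
      then show ?thesis
      proof
        assume "g \<in> P"
        then have "z \<in> X P" unfolding X_def using zB g(2) by blast
        then show ?thesis by blast
      next
        assume "g \<in> Q"
        then have "z \<in> X Q" unfolding X_def using zB g(2) by blast
        then show ?thesis by blast
      qed
    qed
  qed
  have disj: "X P \<inter> X Q = {}"
  proof (rule ccontr)
    assume "X P \<inter> X Q \<noteq> {}"
    then obtain z where zP: "z \<in> X P" and zQ: "z \<in> X Q" by blast
    have zB: "z \<in> B" using zP X_def by blast
    have faceK: "f \<subseteq> - K" if "f \<in> S" for f using that Scomp in_components_subset by blast
    have arcK: "path_image (arcs e) \<subseteq> K" if "e \<in> E" for e using that unfolding drawing_def by blast
    from zP consider f where "f \<in> P" "z \<in> f"
      | e f where "e \<in> E" "u \<in> e" "f \<in> P" "edge_on_face arcs e f" "z \<in> path_image (arcs e)"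
      unfolding X_def by blast
    then show False
    proof cases
      case 1
      from zQ consider g where "g \<in> Q" "z \<in> g"
        | e g where "e \<in> E" "u \<in> e" "g \<in> Q" "edge_on_face arcs e g" "z \<in> path_image (arcs e)"
        unfolding X_def by blast
      then show False
      proof cases
        case a: 1
        have "f \<noteq> g" using 1 a PQ by blast
        moreover have "f \<in> components (- K)" "g \<in> components (- K)" using 1 a PQ Scomp by blast+
        ultimately have "f \<inter> g = {}" using components_nonoverlap by blast
        then show False using 1 a by blast
      next
        case a: 2
        show False using faceK[of f] arcK[OF a(1)] 1 a PQ by blast
      qed
    next
      case 2
      from zQ consider g where "g \<in> Q" "z \<in> g"
        | e' g where "e' \<in> E" "u \<in> e'" "g \<in> Q" "edge_on_face arcs e' g" "z \<in> path_image (arcs e')"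
        unfolding X_def by blast
      then show False
      proof cases
        case a: 1
        show False using faceK[of g] arcK[OF 2(1)] 2 a PQ by blast
      next
        case a: 2
        have "e \<noteq> e'"
        proof
          assume "e = e'"
          then have "dual_adj E arcs f g" using 2 a unfolding dual_adj_def by blast
          then show False using noadj 2(3) a(3) by blast
        qed
        then have "z \<in> {pos u}" using edges_meet[OF 2(1) a(1) _ 2(2) a(2)] 2(5) a(5) by blast
        then show False using zB B_def by blast
      qed
    qed
  qed
  have neP: "X P \<noteq> {}"
  proof -
    obtain s where s: "0 < s" "s < 1" "arcs e1 s \<in> ball (pos u) r" "arcs e1 s \<noteq> pos u"
      using near_vertex_point[OF e1(1,2) r(1)] by blast
    then have "arcs e1 s \<in> X P" unfolding X_def B_def path_image_def using e1 by auto
    then show ?thesis by blast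
  qed
  have neQ: "X Q \<noteq> {}"
  proof -
    obtain s where s: "0 < s" "s < 1" "arcs e2 s \<in> ball (pos u) r" "arcs e2 s \<noteq> pos u"
      using near_vertex_point[OF e2(1,2) r(1)] by blast
    then have "arcs e2 s \<in> X Q" unfolding X_def B_def path_image_def using e2 by auto
    then show ?thesis by blast
  qed
  have oP: "openin (top_of_set B) (X P)" by (rule opn) (use PQ clsP in auto)
  have oQ: "openin (top_of_set B) (X Q)" by (rule opn) (use PQ clsQ in auto)
  show False using cB oP oQ cover disj neP neQ unfolding connected_openin by blast
qed


lemma main:
  fixes \<sigma> :: "'v \<Rightarrow> nat set"
  assumes cc: "induces_connected (\<lambda>u v. {u, v} \<in> E) {v\<in>V. c \<in> \<sigma> v}"
  shows "induces_connected (dual_adj E arcs) {f \<in> components (- K). c \<in> dual_color E arcs \<sigma> f}"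
proof -
  define S where "S = {f \<in> components (- K). c \<in> dual_color E arcs \<sigma> f}"
  define R where "R = {(a, b). a \<in> S \<and> b \<in> S \<and> dual_adj E arcs a b}"
  define Vc where "Vc = {v\<in>V. c \<in> \<sigma> v}"
  have colored: "\<exists>e u. e \<in> E \<and> u \<in> e \<and> u \<in> V \<and> c \<in> \<sigma> u \<and> edge_on_face arcs e f" if "f \<in> S" for f
  proof -
    have "c \<in> dual_color E arcs \<sigma> f" using that S_def by blast
    then obtain e where e: "e \<in> E" "edge_on_face arcs e f" "c \<in> edge_color \<sigma> e"
      unfolding dual_color_def by blast
    then obtain u where "u \<in> e" "c \<in> \<sigma> u" unfolding edge_color_def by blast
    then show ?thesis using e eV by blast
  qed
  have "(x, y) \<in> R\<^sup>*" if xy: "x \<in> S" "y \<in> S" for x y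
  proof (rule ccontr)
    assume nxy: "(x, y) \<notin> R\<^sup>*"
    define P where "P = {z\<in>S. (x, z) \<in> R\<^sup>*}"
    define Q where "Q = S - P"
    have PQ: "P \<union> Q = S" "P \<inter> Q = {}" unfolding P_def Q_def by blast+
    have noadj: "\<not> dual_adj E arcs a b" if "a \<in> P" "b \<in> Q" for a b
    proof
      assume "dual_adj E arcs a b"
      then have "(a, b) \<in> R" using that unfolding R_def P_def Q_def by blast
      moreover have "(x, a) \<in> R\<^sup>*" using that P_def by blast
      ultimately have "(x, b) \<in> R\<^sup>*" by simp
      then show False using that unfolding P_def Q_def by blast
    qed
    have xP: "x \<in> P" using xy P_def by blast
    have yQ: "y \<in> Q" using xy nxy P_def Q_def by blast
    obtain e1 u1 where e1: "e1 \<in> E" "u1 \<in> e1" "u1 \<in> V" "c \<in> \<sigma> u1" "edge_on_face arcs e1 x"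
      using colored[OF xy(1)] by blast
    obtain e2 u2 where e2: "e2 \<in> E" "u2 \<in> e2" "u2 \<in> V" "c \<in> \<sigma> u2" "edge_on_face arcs e2 y"
      using colored[OF xy(2)] by blast
    have path: "(u1, u2) \<in> {(a, b). a \<in> Vc \<and> b \<in> Vc \<and> {a, b} \<in> E}\<^sup>*"
      using cc e1 e2 unfolding induces_connected_def Vc_def by blast
    have "\<exists>e f. e \<in> E \<and> u2 \<in> e \<and> f \<in> P \<and> edge_on_face arcs e f"
      using path
    proof (induction rule: rtrancl_induct)
      case base
      then show ?case using e1 xP by blast
    next
      case (step w w')
      then obtain e f where ef: "e \<in> E" "w \<in> e" "f \<in> P" "edge_on_face arcs e f" by blast
      have ww: "w \<in> V" "c \<in> \<sigma> w" "{w, w'} \<in> E" using step(2) Vc_def by auto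
      obtain g where g: "g \<in> components (- K)" "edge_on_face arcs {w, w'} g"
        using edge_has_face[OF ww(3)] by blast
      have "c \<in> dual_color E arcs \<sigma> g" by (rule face_color[where \<sigma>=\<sigma> and w=w, OF ww(3) _ ww(2) g(2)]) simp
      then have gS: "g \<in> S" using g(1) S_def by blast
      show ?case
      proof (cases "g \<in> P")
        case True
        then show ?thesis using ww(3) g(2) by blast
      next
        case False
        then have "g \<in> Q" using gS Q_def by blast
        have False
          by (rule LL[OF ww(1,2) S_def PQ noadj ef(1,2,3,4) ww(3) _ \<open>g \<in> Q\<close> g(2)]) simp_all
        then show ?thesis ..
      qed
    qed
    then obtain e f where ef: "e \<in> E" "u2 \<in> e" "f \<in> P" "edge_on_face arcs e f" by blast
    show False
      by (rule LL[OF e2(3,4) S_def PQ noadj ef e2(1,2) yQ e2(5)]) simp_all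
  qed
  then show ?thesis unfolding induces_connected_def S_def[symmetric] R_def by blast
qed

end

theorem lemma3p3:
  fixes V :: "'v set" and E :: "'v set set" and pos :: "'v \<Rightarrow> complex"
    and arcs :: "'v set \<Rightarrow> real \<Rightarrow> complex" and m :: nat and \<sigma> :: "'v \<Rightarrow> nat set"
  assumes "plane_graph V E pos arcs"
    and "\<forall>v\<in>V. \<sigma> v \<subseteq> {1..m}"
    and "color_connected V E m \<sigma>"
  shows "dual_color_connected V E pos arcs m \<sigma>"
proof -
  interpret pg V E pos arcs using assms(1) by unfold_locales
  show ?thesis
    unfolding dual_color_connected_def faces_def
    using main assms(3) unfolding color_connected_def by blast
qed

end
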